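(* Let $n\ge 2$ and let $f(x)=\sum_{i=0}^n a_i x^i$ be a polynomial with complex coefficients and $a_n\neq 0$. Write $f(x)=a_n(x+x_1)(x+x_2)\cdots(x+x_n)$ with $x_1,\dots,x_n\in\mathbb{C}$, taken in any order. Define the characteristic roots $b_1,\dots,b_{n-1}$ by the relations $x_i=x_{i-1}+\sum_{j=1}^{i-1}b_j$ for $i=2,\dots,n$. Let $B_n=(b_1,\dots,b_{n-1})^T$, and let $H_n=(h_{ij})_{1\le i,j\le n-1}$ be the symmetric matrix whose entries for $i\ge j$ are $$h_{ij}=\frac{1}{6}\Big(ni^3-\tfrac{3}{2}n(n+1)i^2+\tfrac{1}{2}n(3n+1)i+\tfrac{1}{2}(n^4-n^2)\Big)-\frac{1}{4}\big(i^2-(2n+1)i+n(n+1)\big)(j-1)j,$$ and $h_{ij}=h_{ji}$ for $i<j$. Then the characteristic discriminant $D_n=(n-1)!^2a_{n-1}^2-2\,n!\,(n-2)!\,a_na_{n-2}$ satisfies $$D_n=(n-1)!\,(n-2)!\,a_n^2\,B_n^TH_nB_n,$$ equivalently $B_n^TH_nB_n=\dfrac{1}{a_n^2}\big((n-1)a_{n-1}^2-2na_na_{n-2}\big)$. In particular, $H_n$ has constant positive integer entries depending only on $n$.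
   Context: The numbers $-x_1,\dots,-x_n$ are the roots of $f$ listed with multiplicity. The defining relations are equivalent to $b_1=x_2-x_1$ and $b_j=x_{j+1}-2x_j+x_{j-1}$ for $2\le j\le n-1$. For $n=2$ the matrix $H_2=[1]$. *)

theory Defs
  imports Complex_Main "HOL-Computational_Algebra.Polynomial"
begin

definition H_low :: "nat \<Rightarrow> nat \<Rightarrow> nat \<Rightarrow> real" where
  "H_low n i j =
     (1/6) * (real n * real i ^ 3 - (3/2) * real n * (real n + 1) * real i ^ 2
              + (1/2) * real n * (3 * real n + 1) * real i + (1/2) * (real n ^ 4 - real n ^ 2))
     - (1/4) * (real i ^ 2 - (2 * real n + 1) * real i + real n * (real n + 1)) * ((real j - 1) * real j)"

definition H_mat :: "nat \<Rightarrow> nat \<Rightarrow> nat \<Rightarrow> real" where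
  "H_mat n i j = (if j \<le> i then H_low n i j else H_low n j i)"

definition char_disc :: "nat \<Rightarrow> complex poly \<Rightarrow> complex" where
  "char_disc n f = (fact (n - 1))^2 * (coeff f (n - 1))^2
     - 2 * fact n * fact (n - 2) * coeff f n * coeff f (n - 2)"

text \<open>Quadratic form B^T H_n B (plain transpose, no conjugation).\<close>
definition quad_H :: "nat \<Rightarrow> (nat \<Rightarrow> complex) \<Rightarrow> complex" where
  "quad_H n b = (\<Sum>i=1..n-1. \<Sum>j=1..n-1. b i * complex_of_real (H_mat n i j) * b j)"

end

theory Submission imports Defs begin

definition cr :: "nat \<Rightarrow> nat \<Rightarrow> real" where
  "cr k i = (if i < k then real k - real i else 0)"

definition G :: "nat \<Rightarrow> nat \<Rightarrow> nat \<Rightarrow> real" where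
  "G n i j = real n * (\<Sum>k=1..n. cr k i * cr k j) - (\<Sum>k=1..n. cr k i) * (\<Sum>k=1..n. cr k j)"

lemma cr_new: "cr (Suc (i+m)) i = real m + 1"
  by (simp add: cr_def)

lemma cr_new2: "j \<le> i \<Longrightarrow> cr (Suc (i+m)) j = real m + 1 + real i - real j"
  by (simp add: cr_def)

lemma sumB: "(\<Sum>k=1..i+m. cr k i) = real m * (real m + 1) / 2"
proof (induction m)
  case 0
  have "\<forall>k\<in>{1..i}. cr k i = 0" by (simp add: cr_def)
  then show ?case by simp
next
  case (Suc m)
  have "(\<Sum>k=1..i+Suc m. cr k i) = (\<Sum>k=1..i+m. cr k i) + cr (Suc (i+m)) i"
    by simp
  also have "\<dots> = real m * (real m + 1) / 2 + (real m + 1)" using Suc cr_new by simp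
  also have "\<dots> = real (Suc m) * (real (Suc m) + 1) / 2" by (simp add: field_simps)
  finally show ?case .
qed

lemma sumA: "j \<le> i \<Longrightarrow> (\<Sum>k=1..i+m. cr k i * cr k j) =
   real m * (real m + 1) * (2 * real m + 1) / 6 + (real i - real j) * real m * (real m + 1) / 2"
proof (induction m)
  case 0
  have "\<forall>k\<in>{1..i}. cr k i = 0" by (simp add: cr_def)
  then show ?case by simp
next
  case (Suc m)
  have "(\<Sum>k=1..i+Suc m. cr k i * cr k j) = (\<Sum>k=1..i+m. cr k i * cr k j) + cr (Suc (i+m)) i * cr (Suc (i+m)) j"
    by simp
  also have "\<dots> = real m * (real m + 1) * (2 * real m + 1) / 6 + (real i - real j) * real m * (real m + 1) / 2
     + (real m + 1) * (real m + 1 + real i - real j)" using Suc cr_new cr_new2 by simp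
  also have "\<dots> = real (Suc m) * (real (Suc m) + 1) * (2 * real (Suc m) + 1) / 6 + (real i - real j) * real (Suc m) * (real (Suc m) + 1) / 2"
    by (simp add: field_simps)
  finally show ?case .
qed

lemma polyid: fixes N I J :: real shows
  "(1/6) * (N * I ^ 3 - (3/2) * N * (N + 1) * I ^ 2
              + (1/2) * N * (3 * N + 1) * I + (1/2) * (N ^ 4 - N ^ 2))
     - (1/4) * (I ^ 2 - (2 * N + 1) * I + N * (N + 1)) * ((J - 1) * J)
  = N * ((N - I) * (N - I + 1) * (2 * (N - I) + 1) / 6
     + (I - J) * (N - I) * (N - I + 1) / 2) - (N - I) * (N - I + 1) / 2 * ((N - J) * (N - J + 1) / 2)"
  by (simp add: field_simps power2_eq_square power3_eq_cube power4_eq_xxxx)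

lemma H_low_G: assumes "j \<le> i" "i \<le> n" shows "H_low n i j = G n i j"
proof -
  obtain m where n: "n = i + m" using assms by (metis le_add_diff_inverse)
  have mm: "real n - real i = real m" using n by simp
  have A: "(\<Sum>k=1..n. cr k i * cr k j) = (real n - real i) * (real n - real i + 1) * (2 * (real n - real i) + 1) / 6
     + (real i - real j) * (real n - real i) * (real n - real i + 1) / 2"
    unfolding mm using sumA[of j i m] assms(1) n by simp
  have B: "(\<Sum>k=1..n. cr k i) = (real n - real i) * (real n - real i + 1) / 2"
    unfolding mm using sumB[of i m] n by simp
  obtain m2 where n2: "n = j + m2" using assms by (metis le_add_diff_inverse order.trans)
  have mm2: "real n - real j = real m2" using n2 by simp
  have C: "(\<Sum>k=1..n. cr k j) = (real n - real j) * (real n - real j + 1) / 2"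
    unfolding mm2 using sumB[of j m2] n2 by simp
  show ?thesis unfolding G_def A B C H_low_def by (rule polyid)
qed

lemma pos_expr: fixes M D J :: real assumes "M \<ge> 1" "J \<ge> 1" "D \<ge> 0"
  shows "M*(M+1)/2 * ((M^2-M)/6 + J*(2*M+1)/3) + D*(M*(M+1)*(2*M+1)/6 + M*(M+1)/2*(J-1/2)) + D^2*(M*(M+1)/2)/2 > 0"
proof -
  have s1: "M*(M+1)/2 > 0" using assms by simp
  have "M^2 - M \<ge> 0" using assms by (simp add: power2_eq_square)
  moreover have "J*(2*M+1)/3 > 0" using assms by simp
  ultimately have "(M^2-M)/6 + J*(2*M+1)/3 > 0" by (intro add_nonneg_pos) auto
  then have t1: "M*(M+1)/2 * ((M^2-M)/6 + J*(2*M+1)/3) > 0" by (rule mult_pos_pos[OF s1])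
  have "M*(M+1)*(2*M+1)/6 > 0" using assms by simp
  moreover have "M*(M+1)/2*(J-1/2) > 0" using assms s1 by (intro mult_pos_pos) auto
  ultimately have t2: "D*(M*(M+1)*(2*M+1)/6 + M*(M+1)/2*(J-1/2)) \<ge> 0" using assms by simp
  have t3: "D^2*(M*(M+1)/2)/2 \<ge> 0" using s1 by simp
  show ?thesis using t1 t2 t3 by linarith
qed

lemma polyid2: fixes N I J :: real shows
  "(1/6) * (N * I ^ 3 - (3/2) * N * (N + 1) * I ^ 2
              + (1/2) * N * (3 * N + 1) * I + (1/2) * (N ^ 4 - N ^ 2))
     - (1/4) * (I ^ 2 - (2 * N + 1) * I + N * (N + 1)) * ((J - 1) * J)
  = (N-I)*((N-I)+1)/2 * (((N-I)^2-(N-I))/6 + J*(2*(N-I)+1)/3) + (I-J)*((N-I)*((N-I)+1)*(2*(N-I)+1)/6 + (N-I)*((N-I)+1)/2*(J-1/2)) + (I-J)^2*((N-I)*((N-I)+1)/2)/2"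
  by (simp add: field_simps power2_eq_square power3_eq_cube power4_eq_xxxx)

lemma H_low_pos: assumes "1 \<le> j" "j \<le> i" "i < n" shows "H_low n i j > 0"
proof -
  have "H_low n i j = (real n - real i)*((real n - real i)+1)/2 * (((real n - real i)^2-(real n - real i))/6 + real j*(2*(real n - real i)+1)/3) + (real i - real j)*((real n - real i)*((real n - real i)+1)*(2*(real n - real i)+1)/6 + (real n - real i)*((real n - real i)+1)/2*(real j-1/2)) + (real i - real j)^2*((real n - real i)*((real n - real i)+1)/2)/2"
    unfolding H_low_def by (rule polyid2)
  also have "\<dots> > 0" using assms by (intro pos_expr) auto
  finally show ?thesis .
qed

lemma G_sym: "G n i j = G n j i"
  unfolding G_def by (simp add: mult.commute)

lemma H_mat_G: assumes "i \<le> n" "j \<le> n" shows "H_mat n i j = G n i j"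
  using assms H_low_G[of j i n] H_low_G[of i j n] G_sym[of n i j]
  unfolding H_mat_def by auto

lemma G_Ints: "G n i j \<in> \<int>"
proof -
  have c: "cr k i \<in> \<int>" for k i unfolding cr_def by auto
  show ?thesis unfolding G_def
    by (intro Ints_diff Ints_mult Ints_sum Ints_of_nat c)
qed

lemma H_mat_pos: assumes "1 \<le> i" "i \<le> n-1" "1 \<le> j" "j \<le> n-1" shows "H_mat n i j > 0"
  using assms H_low_pos[of j i n] H_low_pos[of i j n] unfolding H_mat_def by auto

lemma lin_mult: "p * [:c, 1:] = smult c p + pCons 0 (p :: 'a::comm_ring_1 poly)"
proof -
  have "p * [:c, 1:] = pCons c [:1:] * p" by (simp add: mult.commute)
  also have "\<dots> = smult c p + pCons 0 p" by (simp add: mult_pCons_left)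
  finally show ?thesis .
qed

definition PP :: "(nat \<Rightarrow> complex) \<Rightarrow> nat \<Rightarrow> complex poly" where
  "PP x m = (\<Prod>i=1..m. [:x i, 1:])"

lemma PP_Suc: "PP x (Suc m) = smult (x (Suc m)) (PP x m) + pCons 0 (PP x m)"
  unfolding PP_def by (simp add: lin_mult)

lemma PP_top: "coeff (PP x m) m = 1 \<and> (\<forall>k>m. coeff (PP x m) k = 0)"
proof (induction m)
  case 0
  then show ?case by (simp add: PP_def coeff_pCons split: nat.split)
next
  case (Suc m)
  then show ?case by (auto simp: PP_Suc coeff_pCons split: nat.split)
qed

lemma PP_1: "coeff (PP x (Suc m)) m = (\<Sum>i=1..Suc m. x i)"
proof (induction m)
  case 0
  then show ?case by (simp add: PP_Suc PP_def)
next
  case (Suc m)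
  have "coeff (PP x (Suc (Suc m))) (Suc m) = x (Suc (Suc m)) * coeff (PP x (Suc m)) (Suc m) + coeff (PP x (Suc m)) m"
    by (simp add: PP_Suc[of x "Suc m"])
  then show ?case using Suc PP_top[of x "Suc m"] by simp
qed

lemma PP_2: "2 * coeff (PP x (Suc (Suc m))) m = (\<Sum>i=1..Suc (Suc m). x i)^2 - (\<Sum>i=1..Suc (Suc m). x i ^ 2)"
proof (induction m)
  case 0
  have "coeff (PP x 2) 0 = x 2 * x 1"
    using PP_Suc[of x 1] by (simp add: PP_def numeral_2_eq_2)
  then show ?case by (simp add: numeral_2_eq_2 power2_eq_square algebra_simps)
next
  case (Suc m)
  have "coeff (PP x (Suc (Suc (Suc m)))) (Suc m) = x (Suc (Suc (Suc m))) * coeff (PP x (Suc (Suc m))) (Suc m) + coeff (PP x (Suc (Suc m))) m"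
    by (simp add: PP_Suc[of x "Suc (Suc m)"])
  then show ?case using Suc PP_1[of x "Suc m"] by (simp add: power2_eq_square algebra_simps)
qed

lemma quad_expand:
  fixes C :: "nat \<Rightarrow> nat \<Rightarrow> complex" and b :: "nat \<Rightarrow> complex" and K I :: "nat set"
  shows "of_nat n * (\<Sum>k\<in>K. (\<Sum>i\<in>I. C k i * b i)^2) - (\<Sum>k\<in>K. \<Sum>i\<in>I. C k i * b i)^2
     = (\<Sum>i\<in>I. \<Sum>j\<in>I. b i * (of_nat n * (\<Sum>k\<in>K. C k i * C k j) - (\<Sum>k\<in>K. C k i) * (\<Sum>k\<in>K. C k j)) * b j)"
proof -
  have 1: "(\<Sum>k\<in>K. (\<Sum>i\<in>I. C k i * b i)^2) = (\<Sum>k\<in>K. \<Sum>i\<in>I. \<Sum>j\<in>I. C k i * b i * (C k j * b j))"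
    by (simp add: power2_eq_square sum_product)
  also have "\<dots> = (\<Sum>i\<in>I. \<Sum>k\<in>K. \<Sum>j\<in>I. C k i * b i * (C k j * b j))" by (rule sum.swap)
  also have "\<dots> = (\<Sum>i\<in>I. \<Sum>j\<in>I. \<Sum>k\<in>K. C k i * b i * (C k j * b j))" by (rule sum.cong[OF refl], rule sum.swap)
  also have "\<dots> = (\<Sum>i\<in>I. \<Sum>j\<in>I. b i * (\<Sum>k\<in>K. C k i * C k j) * b j)"
    by (simp add: sum_distrib_left sum_distrib_right mult_ac)
  finally have A: "(\<Sum>k\<in>K. (\<Sum>i\<in>I. C k i * b i)^2) = (\<Sum>i\<in>I. \<Sum>j\<in>I. b i * (\<Sum>k\<in>K. C k i * C k j) * b j)" .
  have "(\<Sum>k\<in>K. \<Sum>i\<in>I. C k i * b i) = (\<Sum>i\<in>I. \<Sum>k\<in>K. C k i * b i)" by (rule sum.swap)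
  also have "\<dots> = (\<Sum>i\<in>I. b i * (\<Sum>k\<in>K. C k i))" by (simp add: sum_distrib_left mult_ac)
  finally have B: "(\<Sum>k\<in>K. \<Sum>i\<in>I. C k i * b i)^2 = (\<Sum>i\<in>I. \<Sum>j\<in>I. b i * ((\<Sum>k\<in>K. C k i) * (\<Sum>k\<in>K. C k j)) * b j)"
    by (simp add: power2_eq_square sum_product mult_ac)
  show ?thesis unfolding A B
    by (simp add: sum_distrib_left sum_subtractf[symmetric] algebra_simps)
qed

lemma y_repr:
  fixes x b :: "nat \<Rightarrow> complex"
  assumes brel: "\<forall>i\<in>{2..n}. x i = x (i - 1) + (\<Sum>j=1..i-1. b j)"
  shows "1 \<le> k \<Longrightarrow> k \<le> n \<Longrightarrow> x k - x 1 = (\<Sum>j=1..n-1. complex_of_real (cr k j) * b j)"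
proof (induction k)
  case 0
  then show ?case by simp
next
  case (Suc k)
  show ?case
  proof (cases "k = 0")
    case True
    then show ?thesis by (simp add: cr_def)
  next
    case False
    have IH: "x k - x 1 = (\<Sum>j=1..n-1. complex_of_real (cr k j) * b j)" using Suc False by simp
    have xs: "x (Suc k) = x k + (\<Sum>j=1..k. b j)" using brel Suc.prems False by auto
    have cs: "complex_of_real (cr (Suc k) j) * b j = complex_of_real (cr k j) * b j + (if j \<le> k then b j else 0)"
      if "1 \<le> j" for j
      using that by (auto simp: cr_def algebra_simps)
    have "(\<Sum>j=1..n-1. complex_of_real (cr (Suc k) j) * b j) = (\<Sum>j=1..n-1. complex_of_real (cr k j) * b j) + (\<Sum>j=1..n-1. (if j \<le> k then b j else 0))"
      by (simp add: cs sum.distrib)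
    also have "(\<Sum>j=1..n-1. (if j \<le> k then b j else 0)) = (\<Sum>j\<in>{1..n-1} \<inter> {j. j \<le> k}. b j)"
      by (simp add: sum.inter_restrict)
    also have "{1..n-1} \<inter> {j. j \<le> k} = {1..k}" using Suc.prems by auto
    finally show ?thesis using IH xs by (simp add: algebra_simps)
  qed
qed

theorem mainTheorem1:
  fixes n :: nat and f :: "complex poly" and x b :: "nat \<Rightarrow> complex"
  assumes n2: "n \<ge> 2"
    and deg: "degree f = n"
    and an: "coeff f n \<noteq> 0"
    and roots: "f = smult (coeff f n) (\<Prod>i=1..n. [:x i, 1:])"
    and brel: "\<forall>i\<in>{2..n}. x i = x (i - 1) + (\<Sum>j=1..i-1. b j)"
  shows "char_disc n f = fact (n - 1) * fact (n - 2) * (coeff f n)^2 * quad_H n b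
         \<and> (\<forall>i\<in>{1..n-1}. \<forall>j\<in>{1..n-1}. H_mat n i j \<in> \<int> \<and> H_mat n i j > 0)"
proof
  show "\<forall>i\<in>{1..n-1}. \<forall>j\<in>{1..n-1}. H_mat n i j \<in> \<int> \<and> H_mat n i j > 0"
  proof (intro ballI conjI)
    fix i j assume i: "i \<in> {1..n-1}" and j: "j \<in> {1..n-1}"
    show "H_mat n i j \<in> \<int>" using i j H_mat_G[of i n j] G_Ints by auto
    show "H_mat n i j > 0" using i j H_mat_pos by auto
  qed
next
  obtain k where nk: "n = Suc (Suc k)" using n2 by (metis add_2_eq_Suc le_Suc_ex)
  define a where "a = coeff f n"
  define S1 where "S1 = (\<Sum>i=1..n. x i)"
  define S2 where "S2 = (\<Sum>i=1..n. x i ^ 2)"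
  have f: "f = smult a (PP x n)" using roots unfolding a_def PP_def by simp
  have c1: "coeff f (n-1) = a * S1"
    using PP_1[of x "Suc k"] unfolding f S1_def nk by simp
  have c2: "2 * coeff f (n-2) = a * (S1^2 - S2)"
    using PP_2[of x k] unfolding f S1_def S2_def nk by simp
  define C where "C = (\<lambda>k j. complex_of_real (cr k j))"
  have yk: "x kk - x 1 = (\<Sum>j=1..n-1. C kk j * b j)" if "kk \<in> {1..n}" for kk
    using y_repr[OF brel, of kk] that unfolding C_def by auto
  have "quad_H n b = (\<Sum>i=1..n-1. \<Sum>j=1..n-1. b i * (of_nat n * (\<Sum>kk=1..n. C kk i * C kk j) - (\<Sum>kk=1..n. C kk i) * (\<Sum>kk=1..n. C kk j)) * b j)"
    unfolding quad_H_def
  proof (intro sum.cong refl)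
    fix i j assume "i \<in> {1..n-1}" "j \<in> {1..n-1}"
    then have "H_mat n i j = G n i j" by (intro H_mat_G) auto
    then show "b i * complex_of_real (H_mat n i j) * b j = b i * (of_nat n * (\<Sum>kk=1..n. C kk i * C kk j) - (\<Sum>kk=1..n. C kk i) * (\<Sum>kk=1..n. C kk j)) * b j"
      unfolding G_def C_def by simp
  qed
  also have "\<dots> = of_nat n * (\<Sum>kk=1..n. (\<Sum>i=1..n-1. C kk i * b i)^2) - (\<Sum>kk=1..n. \<Sum>i=1..n-1. C kk i * b i)^2"
    by (rule quad_expand[symmetric])
  also have "\<dots> = of_nat n * (\<Sum>kk=1..n. (x kk - x 1)^2) - (\<Sum>kk=1..n. x kk - x 1)^2"
    using yk by simp
  also have "(\<Sum>kk=1..n. (x kk - x 1)^2) = S2 - 2 * x 1 * S1 + of_nat n * (x 1)^2"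
    unfolding S1_def S2_def by (simp add: power2_eq_square algebra_simps sum.distrib sum_subtractf sum_distrib_left)
  also have "(\<Sum>kk=1..n. x kk - x 1) = S1 - of_nat n * x 1"
    unfolding S1_def by (simp add: sum_subtractf)
  finally have Q: "quad_H n b = of_nat n * S2 - S1^2"
    by (simp add: power2_eq_square algebra_simps)
  have "char_disc n f = (fact (n - 1))^2 * (a * S1)^2 - fact n * fact (n - 2) * a * (2 * coeff f (n - 2))"
    unfolding char_disc_def c1 a_def by (simp add: algebra_simps)
  also have "\<dots> = (fact (n - 1))^2 * (a * S1)^2 - fact n * fact (n - 2) * a * (a * (S1^2 - S2))"
    unfolding c2 ..
  also have "\<dots> = fact (n - 1) * fact (n - 2) * a^2 * (of_nat n * S2 - S1^2)"
    unfolding nk by (simp add: algebra_simps power2_eq_square)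
  finally show "char_disc n f = fact (n - 1) * fact (n - 2) * (coeff f n)^2 * quad_H n b"
    unfolding Q a_def .
qed

end
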